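(* There are infinitely many binary strings $w$ (strings over a two-letter alphabet) such that $\sigma(w)/|w| > 2.035$, where $\sigma(w)$ denotes the sum of the exponents of all runs in $w$.
   Context: For a word $u=u_1\cdots u_m$ over a finite alphabet, the (shortest) period $\mathrm{per}(u)$ is the smallest positive integer $p$ such that $u_i=u_{i+p}$ for all $1\le i\le m-p$; $u[i..j]$ denotes the factor $u_i\cdots u_j$. A run in a word $u$ is an interval $[i..j]$ of positions such that the period $p$ of $u[i..j]$ satisfies $2p\le j-i+1$, and the interval cannot be extended to the left or right without violating this, i.e. $u[i-1]\ne u[i+p-1]$ (or $i=1$) and $u[j-p+1]\ne u[j+1]$ (or $j=|u|$). The exponent of such a run is $(j-i+1)/p$. $\sigma(u)$ is the sum of exponents of all runs in $u$. *)

theory Defs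
  imports Complex_Main
begin

text \<open>Words are lists; positions are 0-indexed here (the paper uses 1-indexed).\<close>

definition is_period :: "'a list \<Rightarrow> nat \<Rightarrow> bool" where
  "is_period u p \<longleftrightarrow> 0 < p \<and> (\<forall>i. i + p < length u \<longrightarrow> u ! i = u ! (i + p))"

definition per :: "'a list \<Rightarrow> nat" where
  "per u = (LEAST p. is_period u p)"

definition factor :: "'a list \<Rightarrow> nat \<Rightarrow> nat \<Rightarrow> 'a list" where
  "factor u i j = take (Suc j - i) (drop i u)"

definition is_run :: "'a list \<Rightarrow> nat \<Rightarrow> nat \<Rightarrow> bool" where
  "is_run u i j \<longleftrightarrow> i \<le> j \<and> j < length u \<and>
     (let p = per (factor u i j) in
        2 * p \<le> j - i + 1 \<and>
        (i = 0 \<or> u ! (i - 1) \<noteq> u ! (i + p - 1)) \<and>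
        (j + 1 = length u \<or> u ! (j + 1 - p) \<noteq> u ! (j + 1)))"

definition runs :: "'a list \<Rightarrow> (nat \<times> nat) set" where
  "runs u = {(i, j). is_run u i j}"

definition run_exponent :: "'a list \<Rightarrow> nat \<times> nat \<Rightarrow> real" where
  "run_exponent u r = real (snd r - fst r + 1) / real (per (factor u (fst r) (snd r)))"

definition sigma :: "'a list \<Rightarrow> real" where
  "sigma u = (\<Sum>r\<in>runs u. run_exponent u r)"

end

theory Submission
  imports Defs
begin


definition pw :: "'a list \<Rightarrow> nat \<Rightarrow> 'a list" where
  "pw w k = concat (replicate k w)"

lemma length_pw: "length (pw w k) = k * length w"
  by (induction k) (auto simp: pw_def)

lemma nth_pw: "x < k * length w \<Longrightarrow> pw w k ! x = w ! (x mod length w)"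
proof (induction k arbitrary: x)
  case 0 then show ?case by simp
next
  case (Suc k)
  have e: "pw w (Suc k) = w @ pw w k" by (simp add: pw_def)
  show ?case
  proof (cases "x < length w")
    case True then show ?thesis by (simp add: e nth_append)
  next
    case False
    then have "x - length w < k * length w" using Suc.prems by auto
    then have "pw w k ! (x - length w) = w ! ((x - length w) mod length w)" by (rule Suc.IH)
    moreover have "(x - length w) mod length w = x mod length w"
      using False by (simp add: mod_if le_mod_geq)
    ultimately show ?thesis using False by (simp add: e nth_append)
  qed
qed

lemma is_period_mult:
  assumes "is_period u q" "a + c * q < length u"
  shows "u ! a = u ! (a + c * q)"
  using assms(2)
proof (induction c)
  case 0 then show ?case by simp
next
  case (Suc c)
  have "u ! a = u ! (a + c * q)" using Suc by simp
  also have "\<dots> = u ! (a + c * q + q)" using assms(1) Suc.prems unfolding is_period_def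
    by (simp add: algebra_simps)
  finally show ?case by (simp add: algebra_simps)
qed

lemma period_diff:
  assumes "is_period u p" "is_period u q" "q < p" "p + q \<le> length u"
  shows "is_period u (p - q)"
  unfolding is_period_def
proof (intro conjI allI impI)
  show "0 < p - q" using assms(3) by simp
  fix i assume i: "i + (p - q) < length u"
  show "u ! i = u ! (i + (p - q))"
  proof (cases "i + p < length u")
    case True
    have "u ! i = u ! (i + p)" using assms(1) True unfolding is_period_def by blast
    also have "\<dots> = u ! (i + (p - q) + q)" using assms(3) by simp
    moreover have "i + (p - q) + q < length u" using True assms(3) by linarith
    then have "u ! (i + (p - q)) = u ! (i + (p - q) + q)" using assms(2) unfolding is_period_def by blast
    ultimately show ?thesis by simp
  next
    case False
    then have iq: "i \<ge> q" using assms(4) by linarith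
    have "i - q + q < length u" using iq i assms(3) by linarith
    then have "u ! (i - q) = u ! (i - q + q)" using assms(2) unfolding is_period_def by blast
    then have 1: "u ! i = u ! (i - q)" using iq by simp
    have "i - q + p < length u" using i iq assms(3) by linarith
    then have "u ! (i - q) = u ! (i - q + p)" using assms(1) unfolding is_period_def by blast
    also have "i - q + p = i + (p - q)" using iq assms(3) by simp
    finally show ?thesis using 1 by simp
  qed
qed

lemma period_gcd:
  "is_period u p \<Longrightarrow> is_period u q \<Longrightarrow> p + q \<le> length u \<Longrightarrow> is_period u (gcd p q)"
proof (induction "p + q" arbitrary: p q rule: less_induct)
  case less
  show ?case
  proof (cases p q rule: linorder_cases)
    case equal then show ?thesis using less by simp
  next
    case less2: less
    have "is_period u (q - p)" using period_diff[OF less.prems(2) less.prems(1) less2] less.prems(3) by simp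
    moreover have "gcd p (q - p) = gcd p q"
      using less2 by (metis gcd.commute gcd_diff1_nat less_imp_le_nat)
    moreover have "p + (q - p) < p + q" using less.prems(1) less2 unfolding is_period_def by simp
    ultimately show ?thesis using less.hyps[of p "q - p"] less.prems less2 by simp
  next
    case greater
    have "is_period u (p - q)" using period_diff[OF less.prems(1) less.prems(2) greater] less.prems(3) by simp
    moreover have "gcd (p - q) q = gcd p q"
      using greater by (metis gcd_diff1_nat less_imp_le_nat)
    moreover have "(p - q) + q < p + q" using less.prems(2) greater unfolding is_period_def by simp
    ultimately show ?thesis using less.hyps[of "p - q" q] less.prems greater by simp
  qed
qed

lemma per_le: "is_period u p \<Longrightarrow> per u \<le> p"
  unfolding per_def by (rule Least_le)

lemma per_period: "is_period u p \<Longrightarrow> is_period u (per u)"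
  unfolding per_def by (rule LeastI)



lemma length_factor: "j < length u \<Longrightarrow> length (factor u i j) = Suc j - i"
  by (simp add: factor_def)

lemma nth_factor: "j < length u \<Longrightarrow> x < Suc j - i \<Longrightarrow> factor u i j ! x = u ! (i + x)"
  by (simp add: factor_def)

lemma run_intro:
  assumes ij: "i \<le> j" "j < length u"
    and pp: "is_period (factor u i j) p" and two: "2*p \<le> j - i + 1"
    and L: "i = 0 \<or> u!(i-1) \<noteq> u!(i+p-1)"
    and R: "j+1 = length u \<or> u!(j+1-p) \<noteq> u!(j+1)"
  shows "is_run u i j \<and> run_exponent u (i,j) \<ge> real (j-i+1) / real p"
proof -
  define f where "f = factor u i j"
  define q where "q = per f"
  have lf: "length f = j - i + 1" using ij by (simp add: f_def length_factor)
  have nf: "\<And>x. x < j - i + 1 \<Longrightarrow> f ! x = u ! (i + x)" using ij by (simp add: f_def nth_factor)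
  have p0: "0 < p" using pp unfolding is_period_def by simp
  have qp: "q \<le> p" using pp by (simp add: q_def f_def per_le)
  have qper: "is_period f q" using pp by (simp add: q_def f_def per_period)
  have q0: "0 < q" using qper unfolding is_period_def by simp
  have "is_period f (gcd q p)" using period_gcd[OF qper pp[folded f_def]] lf two qp by simp
  then have "q \<le> gcd q p" by (simp add: q_def per_le)
  moreover have "gcd q p \<le> q" using q0 by (simp add: gcd_le1_nat)
  ultimately have "gcd q p = q" by simp
  then have "q dvd p" by (metis gcd_dvd2)
  then obtain c where c: "p = q * c" by blast
  have c1: "c \<ge> 1" using c p0 by (cases c) auto
  have pq: "p - q = (c - 1) * q" using c c1 by (simp add: algebra_simps diff_mult_distrib)
  have key: "\<And>a. a + (p - q) < length f \<Longrightarrow> f!a = f!(a + (p-q))"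
    using is_period_mult[OF qper] pq by (simp add: mult.commute)
  have L': "i = 0 \<or> u!(i-1) \<noteq> u!(i+q-1)"
  proof (cases "i = 0")
    case False
    have "f ! (q - 1) = f ! (q - 1 + (p - q))" using key[of "q-1"] lf two q0 qp by simp
    then have "u ! (i + (q - 1)) = u ! (i + (q - 1 + (p - q)))" using nf lf two q0 qp by simp
    then have "u ! (i + q - 1) = u ! (i + p - 1)" using q0 qp by simp
    then show ?thesis using L by simp
  qed simp
  have R': "j+1 = length u \<or> u!(j+1-q) \<noteq> u!(j+1)"
  proof (cases "j+1 = length u")
    case False
    have "f ! (j + 1 - p - i) = f ! (j + 1 - p - i + (p - q))" using key[of "j+1-p-i"] lf two q0 qp by simp
    then have "u ! (i + (j + 1 - p - i)) = u ! (i + (j + 1 - p - i + (p - q)))" using nf lf two q0 qp by simp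
    moreover have "i + (j + 1 - p - i) = j + 1 - p" using two ij by simp
    moreover have "i + (j + 1 - p - i + (p - q)) = j + 1 - q" using two ij qp by simp
    ultimately have "u ! (j + 1 - p) = u ! (j + 1 - q)" by simp
    then show ?thesis using R by simp
  qed simp
  have run: "is_run u i j" unfolding is_run_def Let_def
    using ij L' R' two qp by (simp add: q_def f_def)
  have "run_exponent u (i,j) = real (j-i+1) / real q" by (simp add: run_exponent_def q_def f_def)
  also have "\<dots> \<ge> real (j-i+1) / real p" using q0 qp by (simp add: frac_le)
  finally show ?thesis using run by simp
qed



definition chk :: "'a list \<Rightarrow> nat \<Rightarrow> nat \<times> nat \<times> nat \<Rightarrow> bool" where
  "chk V n t = (case t of (i,j,p) \<Rightarrow>
     0 < i \<and> i \<le> n \<and> i \<le> j \<and> j + 1 < length V \<and> 0 < p \<and> 2*p \<le> j - i + 1 \<and>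
     take (j+1-i-p) (drop i V) = take (j+1-i-p) (drop (i+p) V) \<and>
     V!(i-1) \<noteq> V!(i+p-1) \<and> V!(j+1-p) \<noteq> V!(j+1))"

fun incr :: "nat list \<Rightarrow> bool" where
  "incr (a # b # xs) = (a < b \<and> incr (b # xs))"
| "incr _ = True"

lemma incr_sorted: "incr xs \<Longrightarrow> sorted_wrt (<) xs"
  by (induction xs rule: incr.induct) auto

lemma incr_distinct: "incr xs \<Longrightarrow> distinct xs"
  using incr_sorted strict_sorted_iff by blast

lemma chk_period:
  assumes "chk V n (i,j,p)"
  shows "is_period (factor V i j) p"
proof -
  have a: "i \<le> j" "j + 1 < length V" "0 < p" "2*p \<le> j - i + 1"
    and t: "take (j+1-i-p) (drop i V) = take (j+1-i-p) (drop (i+p) V)"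
    using assms by (auto simp: chk_def)
  show ?thesis unfolding is_period_def
  proof (intro conjI allI impI)
    show "0 < p" using a by simp
    fix x assume x: "x + p < length (factor V i j)"
    then have x': "x < j + 1 - i - p" using a by (simp add: length_factor)
    have "take (j+1-i-p) (drop i V) ! x = take (j+1-i-p) (drop (i+p) V) ! x" using t by simp
    then have "V ! (i + x) = V ! (i + p + x)" using x' a by simp
    then have e: "V ! (i + x) = V ! (i + (x + p))" by (simp add: ac_simps)
    have "factor V i j ! x = V ! (i + x)" using x' a by (simp add: nth_factor)
    moreover have "factor V i j ! (x + p) = V ! (i + (x + p))" using x' a by (simp add: nth_factor)
    ultimately show "factor V i j ! x = factor V i j ! (x + p)" using e by simp
  qed
qed



lemma shift_run:
  fixes w :: "'a list"
  assumes n: "n = length w" "0 < n"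
    and c: "chk (pw w 3) n (i,j,p)"
    and m: "m + 4 \<le> k"
  shows "is_run (pw w k) (i+m*n) (j+m*n) \<and> run_exponent (pw w k) (i+m*n, j+m*n) \<ge> real (j-i+1) / real p"
proof -
  define V where "V = pw w 3"
  define U where "U = pw w k"
  have a: "0 < i" "i \<le> n" "i \<le> j" "j + 1 < length V" "0 < p" "2*p \<le> j - i + 1"
     "V!(i-1) \<noteq> V!(i+p-1)" "V!(j+1-p) \<noteq> V!(j+1)"
    using c by (auto simp: chk_def V_def)
  have lV: "length V = 3*n" by (simp add: V_def length_pw n)
  have lU: "length U = k*n" by (simp add: U_def length_pw n)
  have jb: "j + 1 + m*n < k*n"
  proof -
    have "j + 1 + m*n < 3*n + m*n" using a lV by simp
    also have "\<dots> = (m+3)*n" by (simp add: algebra_simps)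
    also have "\<dots> < k*n" using m n by simp
    finally show ?thesis .
  qed
  have tr: "\<And>x. x < 3*n \<Longrightarrow> x + m*n < k*n \<Longrightarrow> U ! (x + m*n) = V ! x"
  proof -
    fix x assume x: "x < 3*n" "x + m*n < k*n"
    have "U ! (x + m*n) = w ! ((x + m*n) mod n)" using x by (simp add: U_def nth_pw n)
    also have "\<dots> = w ! (x mod n)" by simp
    also have "\<dots> = V ! x" using x by (simp add: V_def nth_pw n)
    finally show "U ! (x + m*n) = V ! x" .
  qed
  have fe: "factor U (i+m*n) (j+m*n) = factor V i j"
  proof (rule nth_equalityI)
    show "length (factor U (i+m*n) (j+m*n)) = length (factor V i j)"
      using a jb lU by (simp add: length_factor)
    fix x assume "x < length (factor U (i+m*n) (j+m*n))"
    then have x: "x < Suc j - i" using a jb lU by (simp add: length_factor)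
    have "factor U (i+m*n) (j+m*n) ! x = U ! (i + m*n + x)"
      using x a jb lU by (simp add: nth_factor)
    also have "\<dots> = U ! ((i + x) + m*n)" by (simp add: ac_simps)
    also have "\<dots> = V ! (i + x)" using tr x a jb lV by simp
    also have "\<dots> = factor V i j ! x" using x a by (simp add: nth_factor)
    finally show "factor U (i+m*n) (j+m*n) ! x = factor V i j ! x" .
  qed
  have pp: "is_period (factor U (i+m*n) (j+m*n)) p"
    using fe chk_period[OF c] by (simp add: V_def)
  have L: "U!(i+m*n-1) \<noteq> U!(i+m*n+p-1)"
  proof -
    have "U!(i+m*n-1) = V!(i-1)" using tr[of "i-1"] a jb lV by (simp add: algebra_simps)
    moreover have "U!(i+m*n+p-1) = V!(i+p-1)" using tr[of "i+p-1"] a jb lV by (simp add: algebra_simps)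
    ultimately show ?thesis using a by simp
  qed
  have R: "U!(j+m*n+1-p) \<noteq> U!(j+m*n+1)"
  proof -
    have "U!(j+m*n+1-p) = V!(j+1-p)" using tr[of "j+1-p"] a jb lV by (simp add: algebra_simps)
    moreover have "U!(j+m*n+1) = V!(j+1)" using tr[of "j+1"] a jb lV by (simp add: algebra_simps)
    ultimately show ?thesis using a by simp
  qed
  have "is_run U (i+m*n) (j+m*n) \<and> run_exponent U (i+m*n, j+m*n) \<ge> real ((j+m*n)-(i+m*n)+1) / real p"
    by (rule run_intro) (use a jb lU pp L R in auto)
  then show ?thesis by (simp add: U_def)
qed

lemma runs_finite: "finite (runs u)"
proof -
  have "runs u \<subseteq> {..<length u} \<times> {..<length u}"
    unfolding runs_def is_run_def by auto
  then show ?thesis by (rule finite_subset) simp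
qed

lemma run_exponent_nonneg: "run_exponent u r \<ge> 0"
  by (simp add: run_exponent_def)

lemma sigma_ge: "A \<subseteq> runs u \<Longrightarrow> sum (run_exponent u) A \<le> sigma u"
  unfolding sigma_def by (rule sum_mono2[OF runs_finite]) (auto simp: run_exponent_nonneg)

lemma global_run:
  fixes w :: "'a list"
  assumes n: "n = length w" "0 < n" and k: "2 \<le> k"
  shows "is_run (pw w k) 0 (k*n-1) \<and> run_exponent (pw w k) (0, k*n-1) \<ge> real k"
proof -
  define U where "U = pw w k"
  have lU: "length U = k*n" by (simp add: U_def length_pw n)
  have kn: "2*n \<le> k*n" using k by simp
  have pp: "is_period (factor U 0 (k*n-1)) n" unfolding is_period_def
  proof (intro conjI allI impI)
    show "0 < n" using n by simp
    fix x assume x: "x + n < length (factor U 0 (k*n-1))"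
    then have x': "x + n < k*n" using lU kn n by (simp add: length_factor)
    have "U ! x = w ! (x mod n)" using x' by (simp add: U_def nth_pw n)
    moreover have "U ! (x + n) = w ! ((x + n) mod n)" using x' by (simp add: U_def nth_pw n)
    ultimately have "U ! x = U ! (x + n)" by simp
    then show "factor U 0 (k*n-1) ! x = factor U 0 (k*n-1) ! (x + n)"
      using x' lU n kn by (simp add: nth_factor)
  qed
  have "is_run U 0 (k*n-1) \<and> run_exponent U (0, k*n-1) \<ge> real (k*n-1-0+1) / real n"
    by (rule run_intro) (use pp lU kn n in auto)
  moreover have "real (k*n-1-0+1) / real n = real k" using n kn by simp
  ultimately show ?thesis by (simp add: U_def)
qed

theorem main_bound:
  fixes w :: "'a list" and T :: "(nat\<times>nat\<times>nat) list"
  assumes n: "n = length w" "0 < n"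
    and C: "list_all (chk (pw w 3) n) T"
    and D: "incr (map (\<lambda>(i,j,p). i * (3*n) + j) T)"
    and k: "4 \<le> k"
  shows "sigma (pw w k) \<ge> real (k - 3) * sum_list (map (\<lambda>(i,j,p). real (j - i + 1) / real p) T) + real k"
proof -
  define U where "U = pw w k"
  define e where "e = (\<lambda>(i::nat,j::nat,p::nat). real (j - i + 1) / real p)"
  define F where "F = (\<lambda>(m,t). case T!t of (i,j,p) \<Rightarrow> (i+m*n, j+m*n))"
  define A where "A = {..<k-3} \<times> {..<length T}"
  have lU: "length U = k*n" by (simp add: U_def length_pw n)
  have CT: "\<And>t. t < length T \<Longrightarrow> chk (pw w 3) n (T!t)"
    using C by (simp add: list_all_length)
  have runF: "\<And>a. a \<in> A \<Longrightarrow> F a \<in> runs U \<and> run_exponent U (F a) \<ge> e (T ! snd a)"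
  proof -
    fix a assume a: "a \<in> A"
    obtain m t where mt: "a = (m,t)" by fastforce
    obtain i j p where ijp: "T!t = (i,j,p)" by (metis prod_cases3)
    have t: "t < length T" and m: "m + 4 \<le> k" using a k by (auto simp: A_def mt)
    have "chk (pw w 3) n (i,j,p)" using CT[OF t] ijp by simp
    from shift_run[OF n this m] show "F a \<in> runs U \<and> run_exponent U (F a) \<ge> e (T ! snd a)"
      by (simp add: F_def mt ijp runs_def U_def e_def)
  qed
  have ipos: "\<And>a. a \<in> A \<Longrightarrow> fst (F a) \<ge> 1 \<and> fst (F a) \<le> n + (fst a) * n"
  proof -
    fix a assume a: "a \<in> A"
    obtain m t where mt: "a = (m,t)" by fastforce
    obtain i j p where ijp: "T!t = (i,j,p)" by (metis prod_cases3)
    have t: "t < length T" using a by (auto simp: A_def mt)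
    have "chk (pw w 3) n (i,j,p)" using CT[OF t] ijp by simp
    then show "fst (F a) \<ge> 1 \<and> fst (F a) \<le> n + (fst a) * n"
      by (simp add: F_def mt ijp chk_def)
  qed
  have inj: "inj_on F A"
  proof (rule inj_onI)
    fix a b assume a: "a \<in> A" and b: "b \<in> A" and eq: "F a = F b"
    obtain m t where mt: "a = (m,t)" by fastforce
    obtain m' t' where mt': "b = (m',t')" by fastforce
    obtain i j p where ijp: "T!t = (i,j,p)" by (metis prod_cases3)
    obtain i' j' p' where ijp': "T!t' = (i',j',p')" by (metis prod_cases3)
    have t: "t < length T" "t' < length T" using a b by (auto simp: A_def mt mt')
    have c1: "chk (pw w 3) n (i,j,p)" using CT[OF t(1)] ijp by simp
    have c2: "chk (pw w 3) n (i',j',p')" using CT[OF t(2)] ijp' by simp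
    have i1: "0 < i" "i \<le> n" "0 < i'" "i' \<le> n" using c1 c2 by (auto simp: chk_def)
    have e1: "i + m*n = i' + m'*n" and e2: "j + m*n = j' + m'*n"
      using eq by (simp_all add: F_def mt mt' ijp ijp')
    have "(i - 1) + m*n = (i' - 1) + m'*n" using e1 i1 by simp
    then have "((i - 1) + m*n) div n = ((i' - 1) + m'*n) div n" by simp
    moreover have "\<And>a mm. a < n \<Longrightarrow> (a + mm*n) div n = mm" using n by simp
    moreover have "i - 1 < n" "i' - 1 < n" using i1 by auto
    ultimately have mm: "m = m'" by metis
    then have ii: "i = i'" "j = j'" using e1 e2 by simp_all
    have dist: "distinct (map (\<lambda>(i,j,p). i * (3*n) + j) T)" using D by (rule incr_distinct)
    have "(map (\<lambda>(i,j,p). i * (3*n) + j) T) ! t = (map (\<lambda>(i,j,p). i * (3*n) + j) T) ! t'"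
      using t ijp ijp' ii by simp
    then have "t = t'" using dist t unfolding distinct_conv_nth by (metis length_map)
    then show "a = b" using mt mt' mm by simp
  qed
  have notin: "(0, k*n-1) \<notin> F ` A"
  proof
    assume "(0, k*n-1) \<in> F ` A"
    then obtain a where "a \<in> A" "F a = (0, k*n-1)" by (metis imageE)
    then show False using ipos[of a] by simp
  qed
  have sub1: "F ` A \<subseteq> runs U" using runF by blast
  have sub2: "(0, k*n-1) \<in> runs U" using global_run[OF n] k by (simp add: runs_def U_def)
  have sub: "insert (0, k*n-1) (F ` A) \<subseteq> runs U" using sub1 sub2 by blast
  have finA: "finite A" by (simp add: A_def)
  have "sigma U \<ge> sum (run_exponent U) (insert (0, k*n-1) (F ` A))"
    using sub by (rule sigma_ge)
  also have "sum (run_exponent U) (insert (0, k*n-1) (F ` A)) = run_exponent U (0, k*n-1) + sum (run_exponent U) (F ` A)"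
    using notin finA by simp
  also have "sum (run_exponent U) (F ` A) = sum (run_exponent U \<circ> F) A"
    using inj by (rule sum.reindex)
  finally have s1: "sigma U \<ge> run_exponent U (0, k*n-1) + sum (run_exponent U \<circ> F) A" .
  have s2: "sum (run_exponent U \<circ> F) A \<ge> sum (\<lambda>a. e (T ! snd a)) A"
    by (rule sum_mono) (use runF in auto)
  have s3: "sum (\<lambda>a. e (T ! snd a)) A = real (k-3) * sum (\<lambda>t. e (T ! t)) {..<length T}"
  proof -
    have "(\<Sum>m\<in>{..<k-3}. \<Sum>t\<in>{..<length T}. e (T!t)) = (\<Sum>(m,t)\<in>{..<k-3}\<times>{..<length T}. e (T!t))"
      by (rule sum.cartesian_product)
    moreover have "(\<lambda>(m::nat,t). e (T!t)) = (\<lambda>a. e (T ! snd a))" by auto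
    ultimately show ?thesis by (simp add: A_def)
  qed
  have s4: "sum (\<lambda>t. e (T ! t)) {..<length T} = sum_list (map e T)"
    by (simp add: sum_list_sum_nth atLeast0LessThan)
  have s5: "run_exponent U (0, k*n-1) \<ge> real k" using global_run[OF n] k by (simp add: U_def)
  show ?thesis using s1 s2 s3 s4 s5 by (simp add: U_def e_def)
qed



fun rng :: "(nat \<Rightarrow> bool) \<Rightarrow> nat \<Rightarrow> nat \<Rightarrow> nat \<Rightarrow> bool" where
  "rng g a 0 p = True"
| "rng g a (Suc m) p = (g a = g (a+p) \<and> rng g (Suc a) m p)"

lemma rng_num: "rng g a m p = (if m = 0 then True else (g a = g (a+p) \<and> rng g (a+1) (m-1) p))"
  by (cases m) auto

lemma rng_sound: "rng g a m p \<Longrightarrow> t < m \<Longrightarrow> g (a+t) = g (a+t+p)"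
proof (induction m arbitrary: a t)
  case 0 then show ?case by simp
next
  case (Suc m)
  show ?case
  proof (cases t)
    case 0 then show ?thesis using Suc.prems by simp
  next
    case (Suc t')
    have "g (Suc a + t') = g (Suc a + t' + p)" using Suc.IH[of "Suc a" t'] Suc.prems \<open>t = Suc t'\<close> by simp
    then show ?thesis using \<open>t = Suc t'\<close> by simp
  qed
qed

definition chkg :: "(nat \<Rightarrow> bool) \<Rightarrow> nat \<Rightarrow> nat \<times> nat \<times> nat \<Rightarrow> bool" where
  "chkg G n t = (case t of (i,j,p) \<Rightarrow> 0 < i \<and> i \<le> n \<and> i \<le> j \<and> j + 1 < 3*n \<and> 0 < p \<and> 2*p \<le> j-i+1 \<and>
     rng G i (j+1-i-p) p \<and> G (i-1) \<noteq> G (i+p-1) \<and> G (j+1-p) \<noteq> G (j+1))"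

lemma chkg_chk:
  assumes V: "\<And>x. x < 3*n \<Longrightarrow> V!x = G x" "length V = 3*n" and c: "chkg G n t"
  shows "chk V n t"
proof -
  obtain i j p where t: "t = (i,j,p)" by (metis prod_cases3)
  have a: "0 < i" "i \<le> n" "i \<le> j" "j + 1 < 3*n" "0 < p" "2*p \<le> j-i+1"
    "rng G i (j+1-i-p) p" "G (i-1) \<noteq> G (i+p-1)" "G (j+1-p) \<noteq> G (j+1)"
    using c by (auto simp: chkg_def t)
  have tk: "take (j+1-i-p) (drop i V) = take (j+1-i-p) (drop (i+p) V)"
  proof (rule nth_equalityI)
    show "length (take (j+1-i-p) (drop i V)) = length (take (j+1-i-p) (drop (i+p) V))"
      using a V(2) by simp
    fix x assume "x < length (take (j+1-i-p) (drop i V))"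
    then have x: "x < j+1-i-p" using a V(2) by simp
    have "take (j+1-i-p) (drop i V) ! x = V ! (i + x)" using x a V(2) by simp
    also have "\<dots> = G (i + x)" using V(1) x a by simp
    also have "\<dots> = G (i + x + p)" using rng_sound[OF a(7) x] .
    also have "\<dots> = V ! (i + p + x)" using V(1) x a by (simp add: ac_simps)
    also have "\<dots> = take (j+1-i-p) (drop (i+p) V) ! x" using x a V(2) by simp
    finally show "take (j+1-i-p) (drop i V) ! x = take (j+1-i-p) (drop (i+p) V) ! x" .
  qed
  have e: "V!(i-1) = G (i-1)" "V!(i+p-1) = G (i+p-1)" "V!(j+1-p) = G (j+1-p)" "V!(j+1) = G (j+1)"
    using V(1) a by simp_all
  show ?thesis using a tk e V(2) by (simp add: chk_def t)
qed


lemma sum_lb: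
  assumes "0 < D"
  shows "real (sum_list (map (\<lambda>(i,j,p). (j-i+1)*D div p) T)) / real D
         \<le> sum_list (map (\<lambda>(i,j,p). real (j-i+1) / real p) T)"
proof (induction T)
  case Nil then show ?case by simp
next
  case (Cons t T)
  obtain i j p where t: "t = (i,j,p)" by (metis prod_cases3)
  have "real ((j-i+1)*D div p) / real D \<le> real ((j-i+1)*D) / real p / real D"
    by (rule divide_right_mono[OF of_nat_div_le_of_nat]) simp
  also have "\<dots> = real (j-i+1) / real p" using assms by (cases "p = 0") (simp_all add: field_simps)
  finally have h: "real ((j-i+1)*D div p) / real D \<le> real (j-i+1) / real p" .
  show ?case using Cons h by (simp add: t add_divide_distrib)
qed

definition wt6 :: "nat \<Rightarrow> bool" where "wt6 x = [False, True, False, False, True, False, True, True, False, True, False, True, True, False] ! x"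
definition wt7 :: "nat \<Rightarrow> bool" where "wt7 x = [True, False, False, True, False, True, True, False, True, False, False, True, False, True, True] ! x"
definition wt5 :: "nat \<Rightarrow> bool" where "wt5 x = (if x < 14 then wt6 x else wt7 (x - 14))"
definition wt9 :: "nat \<Rightarrow> bool" where "wt9 x = [False, True, False, True, True, False, True, False, False, True, False, True, True, False, True] ! x"
definition wt10 :: "nat \<Rightarrow> bool" where "wt10 x = [False, True, True, False, True, False, True, True, False, True, False, False, True, False, True] ! x"
definition wt8 :: "nat \<Rightarrow> bool" where "wt8 x = (if x < 15 then wt9 x else wt10 (x - 15))"
definition wt4 :: "nat \<Rightarrow> bool" where "wt4 x = (if x < 29 then wt5 x else wt8 (x - 29))"
definition wt13 :: "nat \<Rightarrow> bool" where "wt13 x = [True, False, True, False, True, True, False, True, False, False, True, False, True, True] ! x"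
definition wt14 :: "nat \<Rightarrow> bool" where "wt14 x = [False, True, False, True, True, False, True, False, False, True, False, True, True, False, True] ! x"
definition wt12 :: "nat \<Rightarrow> bool" where "wt12 x = (if x < 14 then wt13 x else wt14 (x - 14))"
definition wt16 :: "nat \<Rightarrow> bool" where "wt16 x = [False, True, True, False, True, False, True, True, False, True, False, False, True, False, True] ! x"
definition wt17 :: "nat \<Rightarrow> bool" where "wt17 x = [True, False, True, False, True, True, False, True, False, False, True, False, True, True, False] ! x"
definition wt15 :: "nat \<Rightarrow> bool" where "wt15 x = (if x < 15 then wt16 x else wt17 (x - 15))"
definition wt11 :: "nat \<Rightarrow> bool" where "wt11 x = (if x < 29 then wt12 x else wt15 (x - 29))"
definition wt3 :: "nat \<Rightarrow> bool" where "wt3 x = (if x < 59 then wt4 x else wt11 (x - 59))"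
definition wt21 :: "nat \<Rightarrow> bool" where "wt21 x = [True, False, False, True, False, True, True, False, True, False, True, True, False, True] ! x"
definition wt22 :: "nat \<Rightarrow> bool" where "wt22 x = [False, False, True, False, True, True, False, True, False, True, True, False, True, False, True] ! x"
definition wt20 :: "nat \<Rightarrow> bool" where "wt20 x = (if x < 14 then wt21 x else wt22 (x - 14))"
definition wt24 :: "nat \<Rightarrow> bool" where "wt24 x = [True, False, True, False, False, True, False, True, True, False, True, False, True, True, False] ! x"
definition wt25 :: "nat \<Rightarrow> bool" where "wt25 x = [True, False, False, True, False, True, True, False, True, False, True, True, False, True, False] ! x"
definition wt23 :: "nat \<Rightarrow> bool" where "wt23 x = (if x < 15 then wt24 x else wt25 (x - 15))"
definition wt19 :: "nat \<Rightarrow> bool" where "wt19 x = (if x < 29 then wt20 x else wt23 (x - 29))"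
definition wt28 :: "nat \<Rightarrow> bool" where "wt28 x = [False, True, False, True, True, False, True, False, True, True, False, True, False, True, True] ! x"
definition wt29 :: "nat \<Rightarrow> bool" where "wt29 x = [False, True, False, False, True, False, True, True, False, True, False, True, True, False, True] ! x"
definition wt27 :: "nat \<Rightarrow> bool" where "wt27 x = (if x < 15 then wt28 x else wt29 (x - 15))"
definition wt31 :: "nat \<Rightarrow> bool" where "wt31 x = [False, False, True, False, True, True, False, True, False, True, True, False, True, False, False] ! x"
definition wt32 :: "nat \<Rightarrow> bool" where "wt32 x = [True, False, True, True, False, True, False, False, True, False, True, True, False, True, False] ! x"
definition wt30 :: "nat \<Rightarrow> bool" where "wt30 x = (if x < 15 then wt31 x else wt32 (x - 15))"
definition wt26 :: "nat \<Rightarrow> bool" where "wt26 x = (if x < 30 then wt27 x else wt30 (x - 30))"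
definition wt18 :: "nat \<Rightarrow> bool" where "wt18 x = (if x < 59 then wt19 x else wt26 (x - 59))"
definition wt2 :: "nat \<Rightarrow> bool" where "wt2 x = (if x < 118 then wt3 x else wt18 (x - 118))"
definition wt37 :: "nat \<Rightarrow> bool" where "wt37 x = [True, True, False, True, False, False, True, False, True, True, False, True, False, True] ! x"
definition wt38 :: "nat \<Rightarrow> bool" where "wt38 x = [True, False, True, False, True, True, False, True, False, False, True, False, True, True, False] ! x"
definition wt36 :: "nat \<Rightarrow> bool" where "wt36 x = (if x < 14 then wt37 x else wt38 (x - 14))"
definition wt40 :: "nat \<Rightarrow> bool" where "wt40 x = [True, False, True, True, False, True, False, False, True, False, True, True, False, True, False] ! x"
definition wt41 :: "nat \<Rightarrow> bool" where "wt41 x = [True, True, False, True, False, False, True, False, True, True, False, True, False, True, True] ! x"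
definition wt39 :: "nat \<Rightarrow> bool" where "wt39 x = (if x < 15 then wt40 x else wt41 (x - 15))"
definition wt35 :: "nat \<Rightarrow> bool" where "wt35 x = (if x < 29 then wt36 x else wt39 (x - 29))"
definition wt44 :: "nat \<Rightarrow> bool" where "wt44 x = [False, True, False, True, True, False, True, False, False, True, False, True, True, False, True] ! x"
definition wt45 :: "nat \<Rightarrow> bool" where "wt45 x = [False, True, True, False, True, False, False, True, False, True, True, False, True, False, False] ! x"
definition wt43 :: "nat \<Rightarrow> bool" where "wt43 x = (if x < 15 then wt44 x else wt45 (x - 15))"
definition wt47 :: "nat \<Rightarrow> bool" where "wt47 x = [True, False, True, True, False, True, False, True, True, False, True, False, False, True, False] ! x"
definition wt48 :: "nat \<Rightarrow> bool" where "wt48 x = [True, True, False, True, False, True, True, False, True, False, True, True, False, True, False] ! x"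
definition wt46 :: "nat \<Rightarrow> bool" where "wt46 x = (if x < 15 then wt47 x else wt48 (x - 15))"
definition wt42 :: "nat \<Rightarrow> bool" where "wt42 x = (if x < 30 then wt43 x else wt46 (x - 30))"
definition wt34 :: "nat \<Rightarrow> bool" where "wt34 x = (if x < 59 then wt35 x else wt42 (x - 59))"
definition wt52 :: "nat \<Rightarrow> bool" where "wt52 x = [False, True, False, True, True, False, True, False, True, True, False, True, False, False] ! x"
definition wt53 :: "nat \<Rightarrow> bool" where "wt53 x = [True, False, True, True, False, True, False, True, True, False, True, False, False, True, False] ! x"
definition wt51 :: "nat \<Rightarrow> bool" where "wt51 x = (if x < 14 then wt52 x else wt53 (x - 14))"
definition wt55 :: "nat \<Rightarrow> bool" where "wt55 x = [True, True, False, True, False, False, True, False, True, True, False, True, False, True, True] ! x"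
definition wt56 :: "nat \<Rightarrow> bool" where "wt56 x = [False, True, False, False, True, False, True, True, False, True, False, True, True, False, True] ! x"
definition wt54 :: "nat \<Rightarrow> bool" where "wt54 x = (if x < 15 then wt55 x else wt56 (x - 15))"
definition wt50 :: "nat \<Rightarrow> bool" where "wt50 x = (if x < 29 then wt51 x else wt54 (x - 29))"
definition wt59 :: "nat \<Rightarrow> bool" where "wt59 x = [False, True, True, False, True, False, False, True, False, True, True, False, True, False, True] ! x"
definition wt60 :: "nat \<Rightarrow> bool" where "wt60 x = [True, False, True, False, False, True, False, True, True, False, True, False, True, True, False] ! x"
definition wt58 :: "nat \<Rightarrow> bool" where "wt58 x = (if x < 15 then wt59 x else wt60 (x - 15))"
definition wt62 :: "nat \<Rightarrow> bool" where "wt62 x = [True, False, False, True, False, True, True, False, True, False, True, True, False, True, False] ! x"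
definition wt63 :: "nat \<Rightarrow> bool" where "wt63 x = [True, True, False, True, False, False, True, False, True, True, False, True, False, True, True] ! x"
definition wt61 :: "nat \<Rightarrow> bool" where "wt61 x = (if x < 15 then wt62 x else wt63 (x - 15))"
definition wt57 :: "nat \<Rightarrow> bool" where "wt57 x = (if x < 30 then wt58 x else wt61 (x - 30))"
definition wt49 :: "nat \<Rightarrow> bool" where "wt49 x = (if x < 59 then wt50 x else wt57 (x - 59))"
definition wt33 :: "nat \<Rightarrow> bool" where "wt33 x = (if x < 119 then wt34 x else wt49 (x - 119))"
definition wt1 :: "nat \<Rightarrow> bool" where "wt1 x = (if x < 237 then wt2 x else wt33 (x - 237))"

definition G :: "nat \<Rightarrow> bool" where
  "G x = (if x < 475 then wt1 x else if x < 950 then wt1 (x - 475) else wt1 (x - 950))"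

definition wd :: "bool list" where "wd = map wt1 [0..<475]"

definition TT :: "(nat \<times> nat \<times> nat) list" where "TT = [(2,3,1), (3,6,2), (3,15,5), (4,9,3), (6,7,1), (7,11,2), (8,31,8), (9,14,3), (11,12,1), (12,15,2), (13,18,3), (15,16,1), (16,19,2), (16,49,13), (16,80,31), (16,119,44), (17,22,3), (19,20,1), (20,23,2), (21,26,3), (23,24,1), (24,27,2), (24,36,5), (24,67,18), (25,30,3), (27,28,1), (28,32,2), (29,44,8), (30,35,3), (32,33,1), (33,36,2), (34,39,3), (36,37,1), (37,40,2), (37,54,5), (38,43,3), (40,41,1), (41,45,2), (42,93,13), (43,48,3), (45,46,1), (46,50,2), (47,62,8), (48,53,3), (50,51,1), (51,54,2), (52,57,3), (54,55,1), (55,58,2), (55,67,5), (55,119,31), (56,61,3), (58,59,1), (59,63,2), (60,75,8), (60,171,52), (61,66,3), (63,64,1), (64,67,2), (65,70,3), (67,68,1), (68,71,2), (68,80,5), (68,111,18), (69,74,3), (71,72,1), (72,76,2), (73,88,8), (74,79,3), (76,77,1), (77,80,2), (78,83,3), (80,81,1), (81,84,2), (81,98,5), (82,87,3), (84,85,1), (85,89,2), (86,119,13), (86,324,109), (86,659,270), (87,92,3), (89,90,1), (90,94,2), (91,106,8), (91,140,21), (92,97,3), (94,95,1), (95,98,2), (96,101,3), (98,99,1), (99,102,2), (99,111,5), (100,105,3), (102,103,1), (103,107,2), (104,127,8), (105,110,3), (107,108,1), (108,111,2), (109,114,3), (111,112,1), (112,115,2), (112,145,13), (112,176,31), (112,228,44),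 (113,118,3), (115,116,1), (116,119,2), (117,122,3), (119,120,1), (120,123,2), (120,132,5), (120,163,18), (121,126,3), (123,124,1), (124,128,2), (125,140,8), (126,131,3), (128,129,1), (129,132,2), (130,135,3), (132,133,1), (133,136,2), (133,150,5), (134,139,3), (136,137,1), (137,141,2), (138,189,13), (139,144,3), (141,142,1), (142,146,2), (143,158,8), (144,149,3), (146,147,1), (147,150,2), (148,153,3), (150,151,1), (151,154,2), (151,163,5), (151,220,31), (152,157,3), (154,155,1), (155,159,2), (156,171,8), (156,293,65), (156,485,161), (157,162,3), (159,160,1), (160,163,2), (161,166,3), (163,164,1), (164,167,2), (164,176,5), (164,207,18), (165,170,3), (167,168,1), (168,172,2), (169,184,8), (170,175,3), (172,173,1), (173,176,2), (174,179,3), (176,177,1), (177,180,2), (177,194,5), (178,183,3), (180,181,1), (181,185,2), (182,228,13), (183,188,3), (185,186,1), (186,190,2), (187,202,8), (187,254,34), (188,193,3), (190,191,1), (191,194,2), (192,197,3), (194,195,1), (195,198,2), (195,207,5), (195,389,96), (196,201,3), (198,199,1), (199,203,2), (200,215,8), (200,249,21), (201,206,3), (203,204,1), (204,207,2), (205,210,3), (207,208,1), (208,211,2), (208,220,5), (209,214,3), (211,212,1), (212,216,2), (213,236,8), (214,219,3), (216,217,1), (217,220,2), (218,223,3), (220,221,1), (221,224,2), (221,254,13), (221,285,31), (221,324,44), (222,227,3), (224,225,1), (225,228,2), (226,231,3), (228,229,1), (229,232,2), (229,241,5), (229,272,18), (230,235,3), (232,233,1), (233,237,2), (234,249,8), (235,240,3),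 (237,238,1), (238,241,2), (239,244,3), (241,242,1), (242,245,2), (242,259,5), (243,248,3), (245,246,1), (246,250,2), (247,298,13), (248,253,3), (250,251,1), (251,255,2), (252,267,8), (253,258,3), (255,256,1), (256,259,2), (257,262,3), (259,260,1), (260,263,2), (260,272,5), (260,324,31), (261,266,3), (263,264,1), (264,268,2), (265,280,8), (265,376,52), (266,271,3), (268,269,1), (269,272,2), (270,275,3), (272,273,1), (273,276,2), (273,285,5), (273,316,18), (274,279,3), (276,277,1), (277,281,2), (278,293,8), (279,284,3), (281,282,1), (282,285,2), (283,288,3), (285,286,1), (286,289,2), (286,303,5), (287,292,3), (289,290,1), (290,294,2), (291,324,13), (291,454,65), (292,297,3), (294,295,1), (295,299,2), (296,311,8), (296,345,21), (297,302,3), (299,300,1), (300,303,2), (301,306,3), (303,304,1), (304,307,2), (304,316,5), (305,310,3), (307,308,1), (308,312,2), (309,332,8), (310,315,3), (312,313,1), (313,316,2), (314,319,3), (316,317,1), (317,320,2), (317,350,13), (317,381,31), (317,594,109), (318,323,3), (320,321,1), (321,324,2), (322,327,3), (324,325,1), (325,328,2), (325,337,5), (325,368,18), (326,331,3), (328,329,1), (329,333,2), (330,345,8), (331,336,3), (333,334,1), (334,337,2), (335,340,3), (337,338,1), (338,341,2), (338,355,5), (339,344,3), (341,342,1), (342,346,2), (343,389,13), (344,349,3), (346,347,1), (347,351,2), (348,363,8), (348,415,34), (349,354,3), (351,352,1), (352,355,2), (353,358,3), (355,356,1), (356,359,2), (356,368,5), (356,864,205), (357,362,3), (359,360,1), (360,364,2),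 (361,376,8), (361,410,21), (362,367,3), (364,365,1), (365,368,2), (366,371,3), (368,369,1), (369,372,2), (369,381,5), (370,375,3), (372,373,1), (373,377,2), (374,397,8), (375,380,3), (377,378,1), (378,381,2), (379,384,3), (381,382,1), (382,385,2), (382,415,13), (382,446,31), (382,498,44), (383,388,3), (385,386,1), (386,389,2), (387,392,3), (389,390,1), (390,393,2), (390,402,5), (390,433,18), (391,396,3), (393,394,1), (394,398,2), (395,410,8), (396,401,3), (398,399,1), (399,402,2), (400,405,3), (402,403,1), (403,406,2), (403,420,5), (404,409,3), (406,407,1), (407,411,2), (408,459,13), (409,414,3), (411,412,1), (412,416,2), (413,428,8), (414,419,3), (416,417,1), (417,420,2), (418,423,3), (420,421,1), (421,424,2), (421,433,5), (421,490,31), (422,427,3), (424,425,1), (425,429,2), (426,441,8), (426,563,65), (427,432,3), (429,430,1), (430,433,2), (431,436,3), (433,434,1), (434,437,2), (434,446,5), (434,477,18), (435,440,3), (437,438,1), (438,442,2), (439,454,8), (440,445,3), (442,443,1), (443,446,2), (444,449,3), (446,447,1), (447,450,2), (447,464,5), (448,453,3), (450,451,1), (451,455,2), (452,498,13), (453,458,3), (455,456,1), (456,460,2), (457,472,8), (457,524,34), (458,463,3), (460,461,1), (461,464,2), (462,467,3), (464,465,1), (465,468,2), (465,477,5), (465,690,96), (466,471,3), (468,469,1), (469,473,2), (470,485,8), (470,519,21), (471,476,3), (473,474,1), (474,477,2), (475,480,3)]"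

lemma lw: "length wd = 475" by (simp add: wd_def)

lemma V_G: "x < 3*475 \<Longrightarrow> pw wd 3 ! x = G x"
proof -
  assume x: "x < 3*475"
  have "pw wd 3 ! x = wd ! (x mod 475)" using x by (simp add: nth_pw lw)
  also have "\<dots> = wt1 (x mod 475)" by (simp add: wd_def)
  also have "\<dots> = G x"
  proof (cases "x < 475")
    case True then show ?thesis by (simp add: G_def)
  next
    case False
    show ?thesis
    proof (cases "x < 950")
      case True
      have "x mod 475 = x - 475" using False True by (simp add: le_mod_geq)
      then show ?thesis using False True by (simp add: G_def)
    next
      case False2: False
      have "x mod 475 = (x - 475) mod 475" using False by (simp add: le_mod_geq)
      also have "\<dots> = (x - 475 - 475) mod 475" using False2 by (simp add: le_mod_geq)
      also have "\<dots> = x - 950" using x False2 by simp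
      finally show ?thesis using False False2 by (simp add: G_def)
    qed
  qed
  finally show ?thesis .
qed

lemma chkg_TT: "list_all (chkg G 475) TT"
  unfolding TT_def by (simp add: chkg_def rng_num G_def wt6_def wt7_def wt5_def wt9_def wt10_def wt8_def wt4_def wt13_def wt14_def wt12_def wt16_def wt17_def wt15_def wt11_def wt3_def wt21_def wt22_def wt20_def wt24_def wt25_def wt23_def wt19_def wt28_def wt29_def wt27_def wt31_def wt32_def wt30_def wt26_def wt18_def wt2_def wt37_def wt38_def wt36_def wt40_def wt41_def wt39_def wt35_def wt44_def wt45_def wt43_def wt47_def wt48_def wt46_def wt42_def wt34_def wt52_def wt53_def wt51_def wt55_def wt56_def wt54_def wt50_def wt59_def wt60_def wt58_def wt62_def wt63_def wt61_def wt57_def wt49_def wt33_def wt1_def)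

lemma chk_wd: "list_all (chk (pw wd 3) 475) TT"
proof -
  have l: "length (pw wd 3) = 3 * 475" by (simp add: length_pw lw)
  show ?thesis using chkg_TT
    by (rule list.pred_mono_strong) (rule chkg_chk[OF V_G l])
qed

lemma incr_wd: "incr (map (\<lambda>(i,j,p). i * (3*475) + j) TT)" unfolding TT_def by simp

lemma q_wd: "sum_list (map (\<lambda>(i,j,p). (j-i+1)*1000000 div p) TT) = 966661588" unfolding TT_def by simp

lemma bound_wd:
  assumes k: "2807 \<le> k"
  shows "sigma (pw wd k) / real (length (pw wd k)) > 2.035"
proof -
  define S where "S = sum_list (map (\<lambda>(i,j,p). real (j - i + 1) / real p) TT)"
  have k4: "4 \<le> k" using k by simp
  have sg: "sigma (pw wd k) \<ge> real (k - 3) * S + real k"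
    unfolding S_def by (rule main_bound[OF lw[symmetric] _ chk_wd incr_wd k4]) simp
  have sl: "S \<ge> 966661588 / 1000000"
    using sum_lb[of "1000000" TT] unfolding S_def q_wd by simp
  have kr: "real k \<ge> 2807" using k by simp
  have k3: "real (k - 3) = real k - 3" using k by simp
  have "real (k - 3) * S \<ge> (real k - 3) * (966661588 / 1000000)"
    unfolding k3 by (rule mult_left_mono) (use sl kr in auto)
  then have "sigma (pw wd k) \<ge> (real k - 3) * (966661588 / 1000000) + real k" using sg by linarith
  moreover have "(real k - 3) * (966661588 / 1000000) + real k > 2.035 * (real k * 475)" using kr by simp
  ultimately have "sigma (pw wd k) > 2.035 * (real k * 475)" by linarith
  moreover have "real (length (pw wd k)) = real k * 475" by (simp add: length_pw lw)
  moreover have "real k * 475 > 0" using kr by simp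
  ultimately show ?thesis by (simp add: pos_less_divide_eq mult.commute)
qed

theorem theorem1:
  shows "infinite {w :: bool list. sigma w / real (length w) > 2.035}"
proof
  assume fin: "finite {w :: bool list. sigma w / real (length w) > 2.035}"
  have sub: "pw wd ` {2807..} \<subseteq> {w :: bool list. sigma w / real (length w) > 2.035}"
    using bound_wd by auto
  have inj: "inj_on (pw wd) {2807..}"
  proof (rule inj_onI)
    fix a b assume "pw wd a = pw wd b"
    then have "length (pw wd a) = length (pw wd b)" by simp
    then show "a = b" by (simp add: length_pw lw)
  qed
  have "finite (pw wd ` {2807..})" using fin sub by (rule finite_subset[rotated])
  then have "finite {2807::nat..}" using inj by (rule finite_imageD)
  then show False using infinite_Ici by blast
qed

end
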